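(* Let $G$ be a finite group and $N\lhd G$ such that the short exact sequence $1\to N\to G\to G/N\to1$ splits. Then $\mathcal{K}_r^S(G/N)=1$ in the Burnside ring $\Omega(G)$.
   Context: $\Omega(G)$ is the Burnside ring of $G$ (Grothendieck ring of finite $G$-sets under disjoint union and Cartesian product), with dimension homomorphism $\alpha(X)=|X|$ and regular element $r=G/\{e\}$. $S=\{G/H_1,\dots,G/H_n\}$ where $H_1,\dots,H_n$ is a full set of representatives of the conjugacy classes of subgroups of $G$. For $x\in\Omega(G)$, $S(x)=\{s\in S: s\cdot x\in\mathbb{Z}r\}$, $\mathrm{Ind}(x)=\{m\in\mathbb{Z}: s\cdot x=m r \text{ for some } s\in S(x)\}$, and $\mathcal{K}_r^S(x)=\gcd(\mathrm{Ind}(x))$ (with $\mathcal{K}_r^S(x)=\infty$ if $S(x)=\emptyset$). *)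

theory Defs
  imports "HOL-Algebra.Algebra" "HOL-Library.Extended_Nat"
begin

text \<open>A (finite) G-set is represented by its carrier together with the action map.
  All G-sets built below are genuine actions of the group G.\<close>
type_synonym ('g,'x) gset = "'x set \<times> ('g \<Rightarrow> 'x \<Rightarrow> 'x)"

definition coset_gset :: "('g,'b) monoid_scheme \<Rightarrow> 'g set \<Rightarrow> ('g, 'g set) gset" where
  "coset_gset G H = ({a <#\<^bsub>G\<^esub> H | a. a \<in> carrier G}, \<lambda>g C. g <#\<^bsub>G\<^esub> C)"

definition gset_prod :: "('g,'x) gset \<Rightarrow> ('g,'y) gset \<Rightarrow> ('g,'x \<times> 'y) gset" where
  "gset_prod U V = (Sigma (fst U) (\<lambda>_. fst V), \<lambda>g (x,y). (snd U g x, snd V g y))"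

definition gset_sum :: "('g,'x) gset \<Rightarrow> ('g,'y) gset \<Rightarrow> ('g,'x + 'y) gset" where
  "gset_sum U V = (Inl ` fst U \<union> Inr ` fst V, \<lambda>g. map_sum (snd U g) (snd V g))"

definition gset_copies :: "nat \<Rightarrow> ('g,'x) gset \<Rightarrow> ('g, nat \<times> 'x) gset" where
  "gset_copies n U = (Sigma {..<n} (\<lambda>_. fst U), \<lambda>g (i,x). (i, snd U g x))"

definition gset_empty :: "('g,'x) gset" where
  "gset_empty = ({}, \<lambda>g x. x)"

definition gset_iso :: "('g,'b) monoid_scheme \<Rightarrow> ('g,'x) gset \<Rightarrow> ('g,'y) gset \<Rightarrow> bool" where
  "gset_iso G U V \<longleftrightarrow> (\<exists>f. bij_betw f (fst U) (fst V) \<and>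
      (\<forall>g\<in>carrier G. \<forall>x\<in>fst U. f (snd U g x) = snd V g (f x)))"

text \<open>Elements of the Burnside ring (Grothendieck ring) are formal differences [P] - [Q]
  of finite G-sets; [P] - [Q] = [P'] - [Q'] iff P + Q' and P' + Q are isomorphic
  (the monoid of isomorphism classes of finite G-sets is cancellative).\<close>
definition burnside_eq :: "('g,'b) monoid_scheme \<Rightarrow> ('g,'x) gset \<times> ('g,'y) gset
      \<Rightarrow> ('g,'z) gset \<times> ('g,'w) gset \<Rightarrow> bool" where
  "burnside_eq G A B \<longleftrightarrow>
     gset_iso G (gset_sum (fst A) (snd B)) (gset_sum (fst B) (snd A))"

definition reg_gset :: "('g,'b) monoid_scheme \<Rightarrow> ('g, 'g set) gset" where
  "reg_gset G = coset_gset G {\<one>\<^bsub>G\<^esub>}"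

definition mult_reg :: "('g,'b) monoid_scheme \<Rightarrow> int
      \<Rightarrow> ('g, nat \<times> 'g set) gset \<times> ('g, nat \<times> 'g set) gset" where
  "mult_reg G m = (gset_copies (nat m) (reg_gset G), gset_copies (nat (- m)) (reg_gset G))"

definition burnside_prod_class :: "('g,'b) monoid_scheme \<Rightarrow> 'g set \<Rightarrow> ('g,'x) gset
      \<Rightarrow> ('g, 'g set \<times> 'x) gset \<times> ('g, 'g set \<times> 'x) gset" where
  "burnside_prod_class G H U = (gset_prod (coset_gset G H) U, gset_empty)"

definition conjugate_subgroups :: "('g,'b) monoid_scheme \<Rightarrow> 'g set \<Rightarrow> 'g set \<Rightarrow> bool" where
  "conjugate_subgroups G H K \<longleftrightarrow> (\<exists>g\<in>carrier G. K = (g <#\<^bsub>G\<^esub> H) #>\<^bsub>G\<^esub> inv\<^bsub>G\<^esub> g)"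

definition conj_class_reps :: "('g,'b) monoid_scheme \<Rightarrow> 'g set set \<Rightarrow> bool" where
  "conj_class_reps G Hs \<longleftrightarrow> (\<forall>H\<in>Hs. subgroup H G) \<and>
     (\<forall>K. subgroup K G \<longrightarrow> (\<exists>!H. H \<in> Hs \<and> conjugate_subgroups G H K))"

text \<open>S(x), indexed by the subgroups H in Hs (s = G/H).\<close>
definition S_of :: "('g,'b) monoid_scheme \<Rightarrow> 'g set set \<Rightarrow> ('g,'x) gset \<Rightarrow> 'g set set" where
  "S_of G Hs U = {H \<in> Hs. \<exists>m::int. burnside_eq G (burnside_prod_class G H U) (mult_reg G m)}"

definition Ind :: "('g,'b) monoid_scheme \<Rightarrow> 'g set set \<Rightarrow> ('g,'x) gset \<Rightarrow> int set" where
  "Ind G Hs U = {m. \<exists>H \<in> S_of G Hs U. burnside_eq G (burnside_prod_class G H U) (mult_reg G m)}"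

definition K_r :: "('g,'b) monoid_scheme \<Rightarrow> 'g set set \<Rightarrow> ('g,'x) gset \<Rightarrow> enat" where
  "K_r G Hs U = (if S_of G Hs U = {} then \<infinity> else enat (nat (Gcd (Ind G Hs U))))"

end

theory Submission
  imports Defs
begin

lemma iso_lemma:
  fixes f :: "'x \<Rightarrow> 'y" and U :: "('g,'x) gset" and V :: "('g,'y) gset" and W :: "('g,'w) gset"
    and G :: "('g,'b) monoid_scheme"
  assumes bij: "bij_betw f (fst U) (fst V)"
    and eq: "\<forall>g\<in>carrier G. \<forall>x\<in>fst U. f (snd U g x) = snd V g (f x)"
    and cl: "\<forall>g\<in>carrier G. \<forall>x\<in>fst U. snd U g x \<in> fst U"
  shows "gset_iso G (gset_sum V (gset_copies 0 W)) (gset_sum (gset_copies (Suc 0) U) (gset_empty::('g,'z) gset))"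
proof -
  define f' where "f' = inv_into (fst U) f"
  define F where "F = (\<lambda>z::'y + nat \<times> 'w. (Inl (0::nat, f' (projl z)) :: (nat \<times> _) + 'z))"
  have inj: "inj_on f (fst U)" using bij bij_betw_def by blast
  have b': "bij_betw f' (fst V) (fst U)" unfolding f'_def by (rule bij_betw_inv_into[OF bij])
  have dom: "fst (gset_sum V (gset_copies 0 W)) = Inl ` fst V" by (simp add: gset_sum_def gset_copies_def)
  have cod: "fst (gset_sum (gset_copies (Suc 0) U) (gset_empty::('g,'z) gset)) = Inl ` ({0} \<times> fst U)"
    by (auto simp: gset_sum_def gset_copies_def gset_empty_def)
  have "bij_betw F (Inl ` fst V) (Inl ` ({0} \<times> fst U))"
  proof -
    have "inj_on F (Inl ` fst V)"
      using b' unfolding bij_betw_def inj_on_def F_def by auto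
    moreover have "F ` (Inl ` fst V) = Inl ` ({0} \<times> fst U)"
      using b' unfolding bij_betw_def F_def by (auto simp: image_image)
    ultimately show ?thesis by (simp add: bij_betw_def)
  qed
  moreover have "\<forall>g\<in>carrier G. \<forall>x\<in>Inl ` fst V. F (snd (gset_sum V (gset_copies 0 W)) g x)
        = snd (gset_sum (gset_copies (Suc 0) U) (gset_empty::('g,'z) gset)) g (F x)"
  proof (intro ballI)
    fix g and x :: "'y + nat \<times> 'w" assume g: "g \<in> carrier G" and x: "x \<in> Inl ` fst V"
    then obtain p where p: "p \<in> fst V" "x = Inl p" by auto
    define y where "y = f' p"
    have y: "y \<in> fst U" "f y = p" using b' p unfolding y_def f'_def bij_betw_def
      using bij bij_betw_inv_into_right by fastforce+
    have "f' (snd V g p) = snd U g y"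
      using eq g y cl inj unfolding f'_def by (metis inv_into_f_f)
    then show "F (snd (gset_sum V (gset_copies 0 W)) g x)
        = snd (gset_sum (gset_copies (Suc 0) U) (gset_empty::('g,'z) gset)) g (F x)"
      using p y_def by (simp add: F_def gset_sum_def gset_copies_def)
  qed
  ultimately show ?thesis unfolding gset_iso_def dom cod by blast
qed

lemma (in group) split_iso:
  assumes fin: "finite (carrier G)" and HG: "subgroup H G" and NG: "subgroup N G"
    and HN: "H \<inter> N \<subseteq> {\<one>}" and cardHN: "card H * card N = order G"
  shows "gset_iso G (gset_sum (gset_prod (coset_gset G H) (coset_gset G N)) (gset_copies 0 W))
           (gset_sum (gset_copies (Suc 0) (reg_gset G)) (gset_empty::('a,'z) gset))"
proof -
  define f where "f = (\<lambda>S. (S <#> H, S <#> N))"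
  have R: "fst (reg_gset G) = (\<lambda>a. {a}) ` carrier G"
    by (auto simp: reg_gset_def coset_gset_def l_coset_def) (metis r_one)
  have cH: "fst (coset_gset G H) = lcosets H" by (auto simp: coset_gset_def LCOSETS_def)
  have cN: "fst (coset_gset G N) = lcosets N" by (auto simp: coset_gset_def LCOSETS_def)
  have P: "fst (gset_prod (coset_gset G H) (coset_gset G N)) = (lcosets H) \<times> (lcosets N)"
    by (simp add: gset_prod_def cH cN)
  have fa: "f {a} = (a <# H, a <# N)" for a by (simp add: f_def l_coset_eq_set_mult)
  have inj: "inj_on f (fst (reg_gset G))"
  proof (rule inj_onI)
    fix S T assume S: "S \<in> fst (reg_gset G)" and T: "T \<in> fst (reg_gset G)" and e: "f S = f T"
    from S T R obtain a b where a: "a \<in> carrier G" "S = {a}" and b: "b \<in> carrier G" "T = {b}" by auto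
    have "a <# H = b <# H" "a <# N = b <# N" using e a b fa by auto
    then have "a \<in> b <# H" "a \<in> b <# N" using lcos_self a HG NG by metis+
    then have "inv b \<otimes> a \<in> H" "inv b \<otimes> a \<in> N"
      using subgroup.lcos_module_imp[OF HG is_group b(1)] subgroup.lcos_module_imp[OF NG is_group b(1)] by auto
    then have "inv b \<otimes> a = \<one>" using HN by auto
    then have "a = b" using a b by (metis inv_equality inv_inv inv_closed)
    then show "S = T" using a b by simp
  qed
  have img: "f ` fst (reg_gset G) \<subseteq> (lcosets H) \<times> (lcosets N)"
    using R fa by (auto simp: LCOSETS_def)
  have finP: "finite ((lcosets H) \<times> (lcosets N))"
    using fin by (simp add: LCOSETS_def)
  have H0: "card H > 0" using fin HG
    by (metis card_gt_0_iff empty_iff finite_subset subgroup.one_closed subgroup.subset)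
  have N0: "card N > 0" using fin NG
    by (metis card_gt_0_iff empty_iff finite_subset subgroup.one_closed subgroup.subset)
  have lH: "card (lcosets H) * card H = order G" using l_lagrange[OF fin HG] .
  have lN: "card (lcosets N) * card N = order G" using l_lagrange[OF fin NG] .
  have "card (lcosets H) = card N" using lH cardHN H0 by (metis mult.commute mult_left_cancel less_not_refl2)
  then have cP: "card ((lcosets H) \<times> (lcosets N)) = order G"
    using lN by (simp add: card_cartesian_product mult.commute)
  have cR: "card (fst (reg_gset G)) = order G"
    unfolding R order_def by (rule card_image) (simp add: inj_on_def)
  have "f ` fst (reg_gset G) = (lcosets H) \<times> (lcosets N)"
    using card_subset_eq[OF finP img] card_image[OF inj] cR cP by simp
  then have bij: "bij_betw f (fst (reg_gset G)) (fst (gset_prod (coset_gset G H) (coset_gset G N)))"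
    using inj P by (simp add: bij_betw_def)
  have act: "snd (reg_gset G) g {a} = {g \<otimes> a}" for g a
    by (simp add: reg_gset_def coset_gset_def l_coset_def)
  have eq: "\<forall>g\<in>carrier G. \<forall>x\<in>fst (reg_gset G). f (snd (reg_gset G) g x)
      = snd (gset_prod (coset_gset G H) (coset_gset G N)) g (f x)"
  proof (intro ballI)
    fix g x assume g: "g \<in> carrier G" and x: "x \<in> fst (reg_gset G)"
    then obtain a where a: "a \<in> carrier G" "x = {a}" using R by auto
    show "f (snd (reg_gset G) g x) = snd (gset_prod (coset_gset G H) (coset_gset G N)) g (f x)"
      using a g by (simp add: act fa gset_prod_def coset_gset_def lcos_m_assoc subgroup.subset[OF HG] subgroup.subset[OF NG])
  qed
  have cl: "\<forall>g\<in>carrier G. \<forall>x\<in>fst (reg_gset G). snd (reg_gset G) g x \<in> fst (reg_gset G)"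
    using R act by auto
  show ?thesis by (rule iso_lemma[OF bij eq cl])
qed

lemma (in group) main_aux:
  assumes fin: "finite (carrier G)" and nN: "N \<lhd> G"
    and sig: "\<exists>\<sigma> \<in> hom (G Mod N) G. \<forall>C \<in> carrier (G Mod N). N #> \<sigma> C = C"
    and ccr: "conj_class_reps G Hs"
  shows "K_r G Hs (coset_gset G N) = 1"
proof -
  interpret normal N G by fact
  obtain \<sigma> where sh: "\<sigma> \<in> hom (G Mod N) G" and sC: "\<forall>C \<in> carrier (G Mod N). N #> \<sigma> C = C"
    using sig by blast
  have gh: "group_hom (G Mod N) G \<sigma>"
    using sh factorgroup_is_group by (simp add: group_hom_def group_hom_axioms_def is_group)
  define K where "K = \<sigma> ` carrier (G Mod N)"
  have KG: "subgroup K G" unfolding K_def by (rule group_hom.img_is_subgroup[OF gh])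
  have injs: "inj_on \<sigma> (carrier (G Mod N))"
    using sC by (metis inj_onI)
  have s1: "\<sigma> N = \<one>" using group_hom.hom_one[OF gh] by simp
  have KN: "K \<inter> N \<subseteq> {\<one>}"
  proof
    fix k assume k: "k \<in> K \<inter> N"
    then obtain C where C: "C \<in> carrier (G Mod N)" "k = \<sigma> C" by (auto simp: K_def)
    have "N #> k = N" using k rcos_const[OF is_group] by auto
    then have "C = N" using sC C by auto
    then show "k \<in> {\<one>}" using C s1 by simp
  qed
  have cK: "card K = card (rcosets N)"
    unfolding K_def using card_image[OF injs] by (simp add: FactGroup_def)
  obtain H where H: "H \<in> Hs" "conjugate_subgroups G H K"
    using ccr KG unfolding conj_class_reps_def by blast
  have HG: "subgroup H G" using ccr H unfolding conj_class_reps_def by blast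
  obtain g where g: "g \<in> carrier G" "K = (g <# H) #> inv g"
    using H unfolding conjugate_subgroups_def by blast
  have Kim: "K = (\<lambda>h. g \<otimes> h \<otimes> inv g) ` H"
    using g by (auto simp: l_coset_def r_coset_def image_image)
  have "inj_on (\<lambda>h. g \<otimes> h \<otimes> inv g) H"
  proof (rule inj_onI)
    fix x y assume x: "x \<in> H" and y: "y \<in> H" and e: "g \<otimes> x \<otimes> inv g = g \<otimes> y \<otimes> inv g"
    have xc: "x \<in> carrier G" and yc: "y \<in> carrier G" using x y subgroup.subset[OF HG] by auto
    have "g \<otimes> x = g \<otimes> y" using e r_cancel[of "inv g" "g \<otimes> x" "g \<otimes> y"] g xc yc by simp
    then show "x = y" using l_cancel[of g x y] g xc yc by simp
  qed
  then have cH: "card H = card K" using Kim card_image by metis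
  have HN: "H \<inter> N \<subseteq> {\<one>}"
  proof
    fix h assume h: "h \<in> H \<inter> N"
    have hc: "h \<in> carrier G" using h subgroup.subset[OF HG] by auto
    have "g \<otimes> h \<otimes> inv g \<in> K" using Kim h by auto
    moreover have "g \<otimes> h \<otimes> inv g \<in> N" using inv_op_closed2 g h by auto
    ultimately have "g \<otimes> h \<otimes> inv g = \<one>" using KN by auto
    moreover have "inv g \<otimes> (g \<otimes> h \<otimes> inv g) \<otimes> g = h" using g hc by (simp add: m_assoc flip: m_assoc[of "inv g" g h])
    ultimately have "h = \<one>" using g by simp
    then show "h \<in> {\<one>}" by simp
  qed
  have cardHN: "card H * card N = order G"
    using cH cK lagrange_finite[OF fin is_subgroup] by simp
  have iso: "gset_iso G (gset_sum (gset_prod (coset_gset G H) (coset_gset G N)) (gset_copies 0 (reg_gset G)))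
           (gset_sum (gset_copies (Suc 0) (reg_gset G)) (gset_empty::('a,'a set \<times> 'a set) gset))"
    by (rule split_iso[OF fin HG is_subgroup HN cardHN])
  have be: "burnside_eq G (burnside_prod_class G H (coset_gset G N)) (mult_reg G 1)"
    using iso by (simp add: burnside_eq_def burnside_prod_class_def mult_reg_def)
  have HS: "H \<in> S_of G Hs (coset_gset G N)" using be H(1) unfolding S_of_def by blast
  have I1: "1 \<in> Ind G Hs (coset_gset G N)" using be HS unfolding Ind_def by blast
  have "Gcd (Ind G Hs (coset_gset G N)) dvd 1" using I1 by (rule Gcd_dvd)
  then have "Gcd (Ind G Hs (coset_gset G N)) = 1"
    using Gcd_int_greater_eq_0[of "Ind G Hs (coset_gset G N)"] zdvd1_eq by auto
  then show ?thesis using HS unfolding K_r_def by (auto simp: one_enat_def)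
qed

theorem lemma3p4:
  fixes G :: "('g,'b) monoid_scheme" and N :: "'g set" and Hs :: "'g set set"
  assumes "group G" and "finite (carrier G)" and "N \<lhd> G"
    and "\<exists>\<sigma> \<in> hom (G Mod N) G. \<forall>C \<in> carrier (G Mod N). N #>\<^bsub>G\<^esub> \<sigma> C = C"
    and "conj_class_reps G Hs"
  shows "K_r G Hs (coset_gset G N) = 1"
  using group.main_aux[OF assms] .

end
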